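(* Let $X$ be a Dedekind complete Riesz space and let $x,y,z\in X^{s}$ with $x\le y+z$. Then there exist $y_{1},z_{1}\in X^{s}$ such that $y_{1}\le y$, $z_{1}\le z$ and $x=y_{1}+z_{1}$. If in addition $x\in X$, then $y_{1},z_{1}$ can be taken in $X$.
   Context: For a Dedekind complete Riesz space $X$, its sup-completion $X^{s}$ is the set of classes of nonempty upward directed subsets of $X$ under $A\sim B$ iff $\sup_{a\in A}(x\wedge a)=\sup_{b\in B}(x\wedge b)$ for all $x\in X$, with the induced addition, nonnegative scalar multiplication and order; $X$ is identified with a subset of $X^{s}$ via $x\mapsto[\{x\}]$. It is a lattice-ordered cone in which every nonempty subset has a supremum. *)

theory Defs
  imports Complex_Main
begin

text \<open>A Dedekind complete Riesz space is modelled as a type of class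
  ordered_real_vector (ordered vector space over the reals) that is also a
  conditionally_complete_lattice (lattice, every nonempty bounded-above set
  has a supremum), both with respect to the same order.

  Elements of the sup-completion are represented by nonempty upward directed
  subsets of the space; equality of classes is the relation sc_eq, the order
  is sc_le, addition is the elementwise (Minkowski) sum sc_add, and an element
  x of the space is embedded as the singleton set.\<close>

definition updirected :: "'a::order set \<Rightarrow> bool" where
  "updirected A \<longleftrightarrow> A \<noteq> {} \<and> (\<forall>a\<in>A. \<forall>b\<in>A. \<exists>c\<in>A. a \<le> c \<and> b \<le> c)"

definition sc_le :: "'a::conditionally_complete_lattice set \<Rightarrow> 'a set \<Rightarrow> bool" where
  "sc_le A B \<longleftrightarrow> (\<forall>x. Sup ((\<lambda>a. inf x a) ` A) \<le> Sup ((\<lambda>b. inf x b) ` B))"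

definition sc_eq :: "'a::conditionally_complete_lattice set \<Rightarrow> 'a set \<Rightarrow> bool" where
  "sc_eq A B \<longleftrightarrow> (\<forall>x. Sup ((\<lambda>a. inf x a) ` A) = Sup ((\<lambda>b. inf x b) ` B))"

definition sc_add :: "'a::plus set \<Rightarrow> 'a set \<Rightarrow> 'a set" where
  "sc_add A B = {a + b | a b. a \<in> A \<and> b \<in> B}"

end

theory Submission
  imports Defs
begin

lemma inf_add_r: "inf a b + c = inf (a + c) (b + (c::'a::{ordered_ab_group_add,lattice}))"
proof (rule antisym)
  show "inf a b + c \<le> inf (a + c) (b + c)" by (simp add: add_right_mono)
  have "inf (a + c) (b + c) - c \<le> a" by (metis diff_le_eq inf_le1)
  moreover have "inf (a + c) (b + c) - c \<le> b" by (metis diff_le_eq inf_le2)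
  ultimately have "inf (a + c) (b + c) - c \<le> inf a b" by simp
  then show "inf (a + c) (b + c) \<le> inf a b + c" by (metis diff_le_eq)
qed

lemma neg_inf: "- inf a b = sup (-a) (-(b::'a::{ordered_ab_group_add,lattice}))"
proof (rule antisym)
  have "- sup (-a) (-b) \<le> a" by (metis minus_le_iff sup_ge1)
  moreover have "- sup (-a) (-b) \<le> b" by (metis minus_le_iff sup_ge2)
  ultimately have "- sup (-a) (-b) \<le> inf a b" by simp
  then show "- inf a b \<le> sup (-a) (-b)" by (metis minus_le_iff)
  show "sup (-a) (-b) \<le> - inf a b" by simp
qed

lemma sup_add_r: "sup a b + c = sup (a + c) (b + (c::'a::{ordered_ab_group_add,lattice}))"
proof -
  have "- (sup a b + c) = inf (-a) (-b) + (-c)"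
    using neg_inf[of "-a" "-b"] by (metis minus_add_distrib minus_minus)
  also have "\<dots> = inf (-a-c) (-b-c)" using inf_add_r[of "-a" "-b" "-c"] by simp
  also have "\<dots> = - sup (a+c) (b+c)"
  proof -
    have "- inf (-a-c) (-b-c) = sup (a+c) (b+c)" using neg_inf[of "-a-c" "-b-c"] by (simp add: add.commute)
    then show ?thesis by (metis minus_minus)
  qed
  finally show ?thesis by (metis minus_add_distrib minus_minus neg_equal_iff_equal diff_conv_add_uminus)
qed

lemma add_inf_sup: "a + b = inf a b + sup a (b::'a::{ordered_ab_group_add,lattice})"
proof -
  have "a + b - inf a b = a + b + sup (-a) (-b)" by (simp add: neg_inf)
  also have "\<dots> = sup (-a) (-b) + (a + b)" by (simp add: algebra_simps)
  also have "\<dots> = sup b a" by (simp add: sup_add_r[of "-a" "-b" "a+b"])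
  finally show ?thesis by (simp add: algebra_simps sup_commute)
qed

lemma inf_Sup_distrib:
  fixes S :: "'a::{ordered_ab_group_add, conditionally_complete_lattice} set"
  assumes "S \<noteq> {}" "bdd_above S"
  shows "inf x (Sup S) = Sup ((\<lambda>b. inf x b) ` S)"
proof (rule antisym)
  define s where "s = Sup ((\<lambda>b. inf x b) ` S)"
  define M where "M = Sup S"
  have bd: "bdd_above ((\<lambda>b. inf x b) ` S)" by (rule bdd_aboveI2[of _ _ x]) simp
  have "M \<le> s + sup x M - x" unfolding M_def
  proof (rule cSup_least[OF assms(1)])
    fix b assume b: "b \<in> S"
    have "b = inf x b + sup x b - x" using add_inf_sup[of x b] by (simp add: algebra_simps)
    also have "\<dots> \<le> s + sup x M - x"
    proof -
      have "inf x b \<le> s" unfolding s_def using b bd by (rule cSUP_upper)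
      moreover have "sup x b \<le> sup x M" unfolding M_def using b assms(2)
        by (simp add: cSup_upper le_supI2)
      ultimately show ?thesis by (simp add: add_mono)
    qed
    finally show "b \<le> s + sup x (Sup S) - x" by (simp add: M_def)
  qed
  then have "inf x M \<le> s" using add_inf_sup[of x M]
    by (metis add.commute add_le_cancel_right diff_add_cancel le_diff_eq)
  then show "inf x (Sup S) \<le> Sup ((\<lambda>b. inf x b) ` S)" by (simp add: M_def s_def)
  show "Sup ((\<lambda>b. inf x b) ` S) \<le> inf x (Sup S)"
  proof (rule cSUP_least[OF assms(1)])
    fix b assume "b \<in> S"
    then have "b \<le> Sup S" using assms(2) by (rule cSup_upper)
    then show "inf x b \<le> inf x (Sup S)" by (simp add: le_infI2)
  qed
qed



definition scV :: "'a::conditionally_complete_lattice set \<Rightarrow> 'a \<Rightarrow> 'a" where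
  "scV B t = Sup ((\<lambda>b. inf t b) ` B)"

lemma sc_le_V: "sc_le A B \<longleftrightarrow> (\<forall>x. scV A x \<le> scV B x)"
  by (simp add: sc_le_def scV_def)

lemma sc_eq_V: "sc_eq A B \<longleftrightarrow> (\<forall>x. scV A x = scV B x)"
  by (simp add: sc_eq_def scV_def)

lemma bdd_inf: "bdd_above ((\<lambda>b. inf t b) ` (B::'a::lattice set))"
  by (rule bdd_aboveI2[of _ _ t]) (rule inf_le1)

lemma V_upper: "b \<in> B \<Longrightarrow> inf t b \<le> scV B t"
  unfolding scV_def by (rule cSUP_upper[OF _ bdd_inf])

lemma V_upper2: "b \<in> B \<Longrightarrow> s \<le> inf t b \<Longrightarrow> s \<le> scV B t"
  using V_upper order_trans by blast

lemma V_least: "B \<noteq> {} \<Longrightarrow> (\<And>b. b \<in> B \<Longrightarrow> inf t b \<le> s) \<Longrightarrow> scV B t \<le> s"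
  unfolding scV_def by (rule cSUP_least)

lemma V_le_t: "B \<noteq> {} \<Longrightarrow> scV B t \<le> t"
  by (rule V_least, assumption, rule inf_le1)

lemma V_mono: "B \<noteq> {} \<Longrightarrow> t \<le> t' \<Longrightarrow> scV B t \<le> scV B t'"
  by (rule V_least) (auto intro!: V_upper2 inf_mono)

lemma V_single: "scV {y} x = inf x y"
  by (simp add: scV_def)

definition elem_le where "elem_le y B \<longleftrightarrow> (\<forall>x. inf x y \<le> scV B x)"

lemma elem_le_from:
  fixes B :: "'a::{ordered_ab_group_add, conditionally_complete_lattice} set"
  assumes "B \<noteq> {}" "y \<le> scV B s"
  shows "elem_le y B"
  unfolding elem_le_def
proof
  fix x
  have "inf x y \<le> inf x (scV B s)" using assms(2) by (simp add: le_infI2)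
  also have "\<dots> = Sup ((\<lambda>b. inf x b) ` ((\<lambda>b. inf s b) ` B))"
    unfolding scV_def using inf_Sup_distrib[of "(\<lambda>b. inf s b) ` B" x] assms(1) bdd_inf[of s B] by simp
  also have "\<dots> \<le> scV B x" unfolding image_image
  proof (rule cSUP_least[OF assms(1)])
    fix b assume "b \<in> B"
    then show "inf x (inf s b) \<le> scV B x" by (rule V_upper2) (simp add: le_infI2)
  qed
  finally show "inf x y \<le> scV B x" .
qed

lemma sub_mono_V:
  fixes B :: "'a::{ordered_ab_group_add, conditionally_complete_lattice} set"
  assumes "B \<noteq> {}" "t \<le> t'"
  shows "t - scV B t \<le> t' - scV B t'"
proof -
  have "scV B t' \<le> t' - t + scV B t"
  proof (rule V_least[OF assms(1)])
    fix b assume b: "b \<in> B"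
    have "b \<le> t' - t + b" using assms(2) by simp
    then have "inf t' b \<le> inf t' (t' - t + b)" by (rule inf_mono[OF order_refl])
    also have "\<dots> = t' - t + inf t b" using inf_add_r[of t b "t' - t"] by (simp add: algebra_simps)
    also have "\<dots> \<le> t' - t + scV B t" using V_upper[OF b] by simp
    finally show "inf t' b \<le> t' - t + scV B t" .
  qed
  then show ?thesis by (simp add: algebra_simps)
qed

lemma updirected_image:
  assumes "updirected A" "mono f"
  shows "updirected (f ` A)"
  unfolding updirected_def
proof (intro conjI ballI)
  show "f ` A \<noteq> {}" using assms(1) by (simp add: updirected_def)
  fix u v assume "u \<in> f ` A" "v \<in> f ` A"
  then obtain a b where ab: "a \<in> A" "b \<in> A" "u = f a" "v = f b" by blast
  then obtain c where "c \<in> A" "a \<le> c" "b \<le> c" using assms(1) unfolding updirected_def by blast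
  then show "\<exists>w\<in>f ` A. u \<le> w \<and> v \<le> w" using ab assms(2) by (auto simp: mono_def)
qed

lemma sc_add_updirected:
  fixes Y Z :: "'a::ordered_ab_group_add set"
  assumes "updirected Y" "updirected Z"
  shows "updirected (sc_add Y Z)"
  unfolding updirected_def
proof (intro conjI ballI)
  show "sc_add Y Z \<noteq> {}" using assms unfolding updirected_def sc_add_def by blast
  fix u v assume "u \<in> sc_add Y Z" "v \<in> sc_add Y Z"
  then obtain a b a' b' where ab: "a \<in> Y" "b \<in> Z" "u = a + b" "a' \<in> Y" "b' \<in> Z" "v = a' + b'"
    unfolding sc_add_def by blast
  obtain c where c: "c \<in> Y" "a \<le> c" "a' \<le> c" using assms(1) ab unfolding updirected_def by blast
  obtain d where d: "d \<in> Z" "b \<le> d" "b' \<le> d" using assms(2) ab unfolding updirected_def by blast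
  have "c + d \<in> sc_add Y Z" using c d unfolding sc_add_def by blast
  then show "\<exists>w\<in>sc_add Y Z. u \<le> w \<and> v \<le> w" using ab c d by (auto intro: add_mono)
qed


lemma keyB:
  fixes a b' c' b0 c0 :: "'a::{ordered_ab_group_add, lattice}"
  assumes "b0 \<le> b'" "c0 \<le> c'"
  shows "inf a (b' + c') \<le> c' + (inf (sup (a - c0) b0) b' + inf (a - c0) b0 - b0)"
proof -
  define m where "m = inf (a - c0) b0"
  define L where "L = inf a (b' + c') - c' + b0"
  have Tm: "sup (a - c0) b0 + m = a - c0 + b0"
    using add_inf_sup[of "a - c0" b0] by (simp add: m_def algebra_simps)
  have e1: "inf (sup (a - c0) b0) b' + m = inf (a - c0 + b0) (b' + m)"
    using inf_add_r[of "sup (a - c0) b0" b' m] Tm by simp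
  have e2: "b' + m = inf (a - c0 + b') (b0 + b')"
    using inf_add_r[of "a - c0" b0 b'] by (simp add: m_def algebra_simps)
  have L1: "L \<le> a - c0 + b0"
  proof -
    have "L \<le> a - c' + b0" unfolding L_def by (simp add: algebra_simps)
    also have "\<dots> \<le> a - c0 + b0" using assms(2) by (simp add: algebra_simps)
    finally show ?thesis .
  qed
  have L2: "L \<le> a - c0 + b'"
  proof -
    have "L \<le> a - c' + b0" unfolding L_def by (simp add: algebra_simps)
    also have "\<dots> \<le> a - c0 + b'"
      by (rule add_mono[OF diff_left_mono[OF assms(2)] assms(1)])
    finally show ?thesis .
  qed
  have L3: "L \<le> b0 + b'"
  proof -
    have "L \<le> b' + c' - c' + b0" unfolding L_def
      by (intro add_right_mono diff_right_mono inf_le2)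
    then show ?thesis by (simp add: algebra_simps)
  qed
  have "L \<le> inf (sup (a - c0) b0) b' + m"
    unfolding e1 e2 using L1 L2 L3 by simp
  then show ?thesis unfolding L_def m_def by (simp add: algebra_simps)
qed


lemma decomp:
  fixes Y Z :: "'a::{ordered_ab_group_add, conditionally_complete_lattice} set"
  assumes dY: "updirected Y" and dZ: "updirected Z" and b0: "b0 \<in> Y" and c0: "c0 \<in> Z"
  assumes yf_def: "yf = (\<lambda>a. scV Y (sup (a - c0) b0) + inf (a - c0) b0 - b0)"
  assumes zf_def: "zf = (\<lambda>a. a - yf a)"
  shows "mono yf" "mono zf"
    "\<And>a. a \<le> scV (sc_add Y Z) a \<Longrightarrow> elem_le (yf a) Y"
    "\<And>a. a \<le> scV (sc_add Y Z) a \<Longrightarrow> elem_le (zf a) Z"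
proof -
  have Yne: "Y \<noteq> {}" and Zne: "Z \<noteq> {}" using dY dZ by (auto simp: updirected_def)
  have Wne: "sc_add Y Z \<noteq> {}" using b0 c0 unfolding sc_add_def by blast
  have zf_eq: "zf a = sup (a - c0) b0 - scV Y (sup (a - c0) b0) + c0" for a
    using add_inf_sup[of "a - c0" b0] unfolding zf_def yf_def by (simp add: algebra_simps)
  show "mono yf"
  proof (rule monoI)
    fix a a' :: 'a assume "a \<le> a'"
    then have "a - c0 \<le> a' - c0" by (rule diff_right_mono)
    then have "sup (a - c0) b0 \<le> sup (a' - c0) b0" "inf (a - c0) b0 \<le> inf (a' - c0) b0"
      by (rule sup_mono[OF _ order_refl], rule inf_mono[OF _ order_refl])
    then show "yf a \<le> yf a'" unfolding yf_def using V_mono[OF Yne] add_mono diff_right_mono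
      by (metis)
  qed
  show "mono zf"
  proof (rule monoI)
    fix a a' :: 'a assume "a \<le> a'"
    then have "a - c0 \<le> a' - c0" by (rule diff_right_mono)
    then have "sup (a - c0) b0 \<le> sup (a' - c0) b0"
      by (rule sup_mono[OF _ order_refl])
    then show "zf a \<le> zf a'" unfolding zf_eq using sub_mono_V[OF Yne] add_right_mono by blast
  qed
  show "elem_le (yf a) Y" for a
  proof (rule elem_le_from[OF Yne, of _ "sup (a - c0) b0"])
    have "inf (a - c0) b0 - b0 \<le> 0" by (simp add: le_infI2)
    then show "yf a \<le> scV Y (sup (a - c0) b0)" unfolding yf_def
      by (metis add_diff_eq add_le_same_cancel1)
  qed
  show "elem_le (zf a) Z" if aW: "a \<le> scV (sc_add Y Z) a" for a
  proof (rule elem_le_from[OF Zne, of _ "zf a"])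
    define S where "S = scV Z (zf a)"
    have "scV (sc_add Y Z) a \<le> S + yf a"
    proof (rule V_least[OF Wne])
      fix w assume "w \<in> sc_add Y Z"
      then obtain b c where bc: "b \<in> Y" "c \<in> Z" "w = b + c" unfolding sc_add_def by blast
      obtain b' where b': "b' \<in> Y" "b \<le> b'" "b0 \<le> b'" using dY bc b0 unfolding updirected_def by blast
      obtain c' where c': "c' \<in> Z" "c \<le> c'" "c0 \<le> c'" using dZ bc c0 unfolding updirected_def by blast
      have "inf a w \<le> inf a (b' + c')" unfolding bc using b' c' by (simp add: add_mono le_infI2)
      moreover have "inf a (b' + c') - yf a \<le> inf (zf a) c'"
      proof (rule le_infI)
        show "inf a (b' + c') - yf a \<le> zf a" unfolding zf_def by (simp add: diff_right_mono)
        have "yf a \<ge> inf (sup (a - c0) b0) b' + inf (a - c0) b0 - b0"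
          unfolding yf_def using V_upper[OF b'(1)] by (simp add: add_right_mono diff_right_mono)
        then have "inf a (b' + c') \<le> c' + yf a" using keyB[OF b'(3) c'(3), of a]
          by (metis add_left_mono order_trans)
        then show "inf a (b' + c') - yf a \<le> c'" by (simp add: diff_le_eq add.commute)
      qed
      moreover have "inf (zf a) c' \<le> S" unfolding S_def by (rule V_upper[OF c'(1)])
      ultimately show "inf a w \<le> S + yf a"
        by (metis diff_le_eq order_trans)
    qed
    with aW have "a \<le> S + yf a" by simp
    then show "zf a \<le> scV Z (zf a)" unfolding zf_def S_def by (simp add: diff_le_eq)
  qed
qed


theorem mainTheorem11:
  fixes X Y Z :: "'a::{ordered_real_vector, conditionally_complete_lattice} set"
  assumes "updirected X" and "updirected Y" and "updirected Z"
    and "sc_le X (sc_add Y Z)"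
  shows "(\<exists>Y1 Z1. updirected Y1 \<and> updirected Z1 \<and> sc_le Y1 Y \<and> sc_le Z1 Z
            \<and> sc_eq X (sc_add Y1 Z1))
       \<and> ((\<exists>x0. sc_eq X {x0}) \<longrightarrow>
            (\<exists>y1 z1. sc_le {y1} Y \<and> sc_le {z1} Z \<and> sc_eq X (sc_add {y1} {z1})))"
proof -
  note dX = assms(1) and dY = assms(2) and dZ = assms(3)
  obtain b0 where b0: "b0 \<in> Y" using dY by (auto simp: updirected_def)
  obtain c0 where c0: "c0 \<in> Z" using dZ by (auto simp: updirected_def)
  have Xne: "X \<noteq> {}" using dX by (auto simp: updirected_def)
  define yf where "yf = (\<lambda>a. scV Y (sup (a - c0) b0) + inf (a - c0) b0 - b0)"
  define zf where "zf = (\<lambda>a. a - yf a)"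
  note D = decomp[OF dY dZ b0 c0 yf_def zf_def]
  have le: "\<And>x. scV X x \<le> scV (sc_add Y Z) x" using assms(4) by (simp add: sc_le_V)
  have aW: "a \<le> scV (sc_add Y Z) a" if "a \<in> X" for a
  proof -
    have "a \<le> scV X a" using V_upper[OF that, of a] by simp
    then show ?thesis using le[of a] by simp
  qed
  have sum: "yf a + zf a = a" for a unfolding zf_def by simp
  have P1: "\<exists>Y1 Z1. updirected Y1 \<and> updirected Z1 \<and> sc_le Y1 Y \<and> sc_le Z1 Z
            \<and> sc_eq X (sc_add Y1 Z1)"
  proof (intro exI conjI)
    show "updirected (yf ` X)" by (rule updirected_image[OF dX D(1)])
    show "updirected (zf ` X)" by (rule updirected_image[OF dX D(2)])
    show "sc_le (yf ` X) Y" unfolding sc_le_V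
    proof
      fix x
      show "scV (yf ` X) x \<le> scV Y x"
        using D(3)[OF aW] Xne by (auto intro!: V_least simp: elem_le_def)
    qed
    show "sc_le (zf ` X) Z" unfolding sc_le_V
    proof
      fix x
      show "scV (zf ` X) x \<le> scV Z x"
        using D(4)[OF aW] Xne by (auto intro!: V_least simp: elem_le_def)
    qed
    show "sc_eq X (sc_add (yf ` X) (zf ` X))" unfolding sc_eq_V
    proof
      fix x
      have ne: "sc_add (yf ` X) (zf ` X) \<noteq> {}" using Xne unfolding sc_add_def by blast
      show "scV X x = scV (sc_add (yf ` X) (zf ` X)) x"
      proof (rule antisym)
        show "scV X x \<le> scV (sc_add (yf ` X) (zf ` X)) x"
        proof (rule V_least[OF Xne])
          fix a assume a: "a \<in> X"
          have "yf a + zf a \<in> sc_add (yf ` X) (zf ` X)" using a unfolding sc_add_def by blast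
          then show "inf x a \<le> scV (sc_add (yf ` X) (zf ` X)) x"
            using V_upper[of "yf a + zf a" _ x] sum[of a] by simp
        qed
        show "scV (sc_add (yf ` X) (zf ` X)) x \<le> scV X x"
        proof (rule V_least[OF ne])
          fix v assume "v \<in> sc_add (yf ` X) (zf ` X)"
          then obtain a1 a2 where a: "a1 \<in> X" "a2 \<in> X" "v = yf a1 + zf a2"
            unfolding sc_add_def by blast
          obtain a3 where a3: "a3 \<in> X" "a1 \<le> a3" "a2 \<le> a3"
            using dX a unfolding updirected_def by blast
          have "v \<le> yf a3 + zf a3" unfolding a(3)
            using a3 D(1) D(2) by (simp add: add_mono monoD)
          then have "inf x v \<le> inf x a3" using sum[of a3] by (simp add: le_infI2)
          then show "inf x v \<le> scV X x" using V_upper2[OF a3(1)] by blast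
        qed
      qed
    qed
  qed
  have P2: "\<exists>y1 z1. sc_le {y1} Y \<and> sc_le {z1} Z \<and> sc_eq X (sc_add {y1} {z1})"
    if "sc_eq X {x0}" for x0
  proof -
    have eqX: "scV X x = inf x x0" for x using that by (simp add: sc_eq_V V_single)
    have x0W: "x0 \<le> scV (sc_add Y Z) x0" using le[of x0] eqX[of x0] by simp
    show ?thesis
    proof (intro exI conjI)
      show "sc_le {yf x0} Y" using D(3)[OF x0W] by (simp add: sc_le_V V_single elem_le_def)
      show "sc_le {zf x0} Z" using D(4)[OF x0W] by (simp add: sc_le_V V_single elem_le_def)
      have "sc_add {yf x0} {zf x0} = {x0}" using sum[of x0] by (simp add: sc_add_def)
      then show "sc_eq X (sc_add {yf x0} {zf x0})" using that by simp
    qed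
  qed
  show ?thesis using P1 P2 by blast
qed

end
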